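(* Let $G_1,G_2$ be disjoint graphs, $u\in V(G_1)$, $w\in V(G_2)$, $H=G_1uwG_2$, and $\Delta\nu:=\nu(H)-\nu(G_1)-\nu(G_2)$. For any pattern $\mathbf{s}$ on $H$ with $N(H)\mathbf{s}=\mathbf{1}$, let $\mathbf{s}_1,\mathbf{s}_2$ be its restrictions to $V(G_1)$, $V(G_2)$. Then, according to $(\mathcal{A}_{G_1}(u),\mathcal{A}_{G_2}(w))$: (i) $(0,0)$: $\mathcal{A}_H(u)=0$, $\mathcal{A}_H(w)=0$, $\Delta\nu=0$, and every such $\mathbf{s}$ has $N(G_1)\mathbf{s}_1=\mathbf{1}$, $N(G_2)\mathbf{s}_2=\mathbf{1}$. (ii) $(0,1)$: $\mathcal{A}_H(u)=0$, $\mathcal{A}_H(w)=1$, $\Delta\nu=0$, and every such $\mathbf{s}$ has $N(G_1)\mathbf{s}_1=\overline{\mathbf{c}_u}$, $N(G_2)\mathbf{s}_2=\mathbf{1}$. (iii) $(0,-1)$: $\mathcal{A}_H(u)=0$, $\mathcal{A}_H(w)=-1$, $\Delta\nu=0$; every such $\mathbf{s}$ has $N(G_2)\mathbf{s}_2=\mathbf{1}$, and $N(G_1)\mathbf{s}_1=\mathbf{1}$ if $\mathbf{s}(w)=0$, $N(G_1)\mathbf{s}_1=\overline{\mathbf{c}_u}$ if $\mathbf{s}(w)=1$. (iv) $(1,1)$: $\mathcal{A}_H(u)=-1$, $\mathcal{A}_H(w)=-1$, $\Delta\nu=1$; for every such $\mathbf{s}$, either $\mathbf{s}(u)=0,\mathbf{s}(w)=1$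 and $N(G_1)\mathbf{s}_1=\overline{\mathbf{c}_u}$, $N(G_2)\mathbf{s}_2=\mathbf{1}$, or $\mathbf{s}(u)=1,\mathbf{s}(w)=0$ and $N(G_1)\mathbf{s}_1=\mathbf{1}$, $N(G_2)\mathbf{s}_2=\overline{\mathbf{c}_w}$. (v) $(1,-1)$: $\mathcal{A}_H(u)=0$, $\mathcal{A}_H(w)=1$, $\Delta\nu=-1$, and every such $\mathbf{s}$ has $N(G_1)\mathbf{s}_1=\overline{\mathbf{c}_u}$, $N(G_2)\mathbf{s}_2=\mathbf{1}$. (vi) $(-1,-1)$: $\mathcal{A}_H(u)=0$, $\mathcal{A}_H(w)=0$, $\Delta\nu=-2$, and every such $\mathbf{s}$ has $N(G_1)\mathbf{s}_1=\mathbf{1}$, $N(G_2)\mathbf{s}_2=\mathbf{1}$. The remaining cases $(1,0)$, $(-1,0)$, $(-1,1)$ are obtained from (ii), (iii), (v) by interchanging the roles of $(G_1,u)$ and $(G_2,w)$. In compact form: $\Delta\nu=-2$ if $\mathcal{A}_{G_1}(u)=\mathcal{A}_{G_2}(w)=-1$ and $\Delta\nu=\mathcal{A}_{G_1}(u)\mathcal{A}_{G_2}(w)$ otherwise; and $\mathcal{A}_H(u)\equiv\mathcal{A}_{G_1}(u)(1+\mathcal{A}_{G_2}(w)) \pmod 3$, $\mathcal{A}_H(w)\equiv\mathcal{A}_{G_2}(w)(1+\mathcal{A}_{G_1}(u)) \pmod 3$ (with activation numbers in $\{-1,0,1\}$).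
   Context: For a finite simple graph $G$ with vertex set $\{v_1,\dots,v_n\}$, the closed adjacency matrix $N(G)$ is the $n\times n$ matrix over $\mathbb{Z}_2$ whose $(i,j)$ entry is $1$ iff $i=j$ or $v_i$ is adjacent to $v_j$. Vectors in $\mathbb{Z}_2^{V(G)}$ are patterns/configurations; $\mathbf{p}$ solves $\mathbf{c}$ if $N(G)\mathbf{p}=\mathbf{c}$. The nullity is $\nu(G):=\dim\operatorname{Ker}(N(G))$; elements of the kernel are null patterns. $\mathbf{1}$ denotes the all-ones configuration (of whichever graph is meant); it is solvable on every graph. For a vertex $u$, $\mathbf{c}_u$ is the configuration with $\mathbf{c}_u(v)=1$ iff $v=u$, and $\overline{\mathbf{c}_u}:=\mathbf{c}_u+\mathbf{1}$. A vertex $v$ is half-activated if $\boldsymbol{\ell}(v)=1$ for some null pattern $\boldsymbol{\ell}$; otherwise it is always-activated if $\mathbf{p}(v)=1$ for every $\mathbf{p}$ with $N(G)\mathbf{p}=\mathbf{1}$, and never-activated if $\mathbf{p}(v)=0$ for every such $\mathbf{p}$. The activation number $\mathcal{A}_G(v)$ is $1$, $0$, $-1$ for always-, never-, half-activated respectively. $G_1uwG_2$ denotes the graph obtained from the disjoint union of $G_1,G_2$ by adding the edge $uw$. *)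

theory Defs
  imports Main "HOL.Vector_Spaces" "HOL-Library.Z2" "HOL-Library.Function_Algebras"
begin

definition sgraph :: "'a set \<Rightarrow> ('a \<Rightarrow> 'a \<Rightarrow> bool) \<Rightarrow> bool" where
  "sgraph V E \<longleftrightarrow> finite V \<and> (\<forall>x y. E x y \<longrightarrow> x \<in> V \<and> y \<in> V)
     \<and> (\<forall>x y. E x y \<longrightarrow> E y x) \<and> (\<forall>x. \<not> E x x)"

definition patterns :: "'a set \<Rightarrow> ('a \<Rightarrow> bit) set" where
  "patterns V = {p. \<forall>x. x \<notin> V \<longrightarrow> p x = 0}"

text \<open>(N(G) p)(v) : the closed-adjacency matrix applied to p, at vertex v.\<close>
definition Nmul :: "'a set \<Rightarrow> ('a \<Rightarrow> 'a \<Rightarrow> bool) \<Rightarrow> ('a \<Rightarrow> bit) \<Rightarrow> 'a \<Rightarrow> bit" where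
  "Nmul V E p v = (\<Sum>x\<in>V. if x = v \<or> E v x then p x else 0)"

definition solves :: "'a set \<Rightarrow> ('a \<Rightarrow> 'a \<Rightarrow> bool) \<Rightarrow> ('a \<Rightarrow> bit) \<Rightarrow> ('a \<Rightarrow> bit) \<Rightarrow> bool" where
  "solves V E p c \<longleftrightarrow> p \<in> patterns V \<and> (\<forall>v\<in>V. Nmul V E p v = c v)"

definition null_patterns :: "'a set \<Rightarrow> ('a \<Rightarrow> 'a \<Rightarrow> bool) \<Rightarrow> ('a \<Rightarrow> bit) set" where
  "null_patterns V E = {p. solves V E p (\<lambda>_. 0)}"

definition nullity :: "'a set \<Rightarrow> ('a \<Rightarrow> 'a \<Rightarrow> bool) \<Rightarrow> nat" where
  "nullity V E = vector_space.dim (\<lambda>(c::bit) f x. c * f x) (null_patterns V E)"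

definition ones :: "'a \<Rightarrow> bit" where
  "ones = (\<lambda>_. 1)"

definition cfg :: "'a \<Rightarrow> 'a \<Rightarrow> bit" where
  "cfg u = (\<lambda>v. if v = u then 1 else 0)"

definition cbar :: "'a \<Rightarrow> 'a \<Rightarrow> bit" where
  "cbar u = (\<lambda>v. cfg u v + 1)"

definition half_activated :: "'a set \<Rightarrow> ('a \<Rightarrow> 'a \<Rightarrow> bool) \<Rightarrow> 'a \<Rightarrow> bool" where
  "half_activated V E v \<longleftrightarrow> (\<exists>l\<in>null_patterns V E. l v = 1)"

definition always_activated :: "'a set \<Rightarrow> ('a \<Rightarrow> 'a \<Rightarrow> bool) \<Rightarrow> 'a \<Rightarrow> bool" where
  "always_activated V E v \<longleftrightarrow> \<not> half_activated V E v \<and>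
     (\<forall>p. solves V E p ones \<longrightarrow> p v = 1)"

definition never_activated :: "'a set \<Rightarrow> ('a \<Rightarrow> 'a \<Rightarrow> bool) \<Rightarrow> 'a \<Rightarrow> bool" where
  "never_activated V E v \<longleftrightarrow> \<not> half_activated V E v \<and>
     (\<forall>p. solves V E p ones \<longrightarrow> p v = 0)"

text \<open>Activation number: 1 always, 0 never, -1 half-activated.  (Since the all-ones
  configuration is solvable on every graph, every vertex falls in exactly one class.)\<close>
definition activation :: "'a set \<Rightarrow> ('a \<Rightarrow> 'a \<Rightarrow> bool) \<Rightarrow> 'a \<Rightarrow> int" where
  "activation V E v = (if half_activated V E v then -1
      else if always_activated V E v then 1 else 0)"

definition join_edges :: "('a \<Rightarrow> 'a \<Rightarrow> bool) \<Rightarrow> ('a \<Rightarrow> 'a \<Rightarrow> bool) \<Rightarrow> 'a \<Rightarrow> 'a \<Rightarrow> 'a \<Rightarrow> 'a \<Rightarrow> bool" where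
  "join_edges E1 E2 u w = (\<lambda>x y. E1 x y \<or> E2 x y \<or> (x = u \<and> y = w) \<or> (x = w \<and> y = u))"

definition restr :: "'a set \<Rightarrow> ('a \<Rightarrow> bit) \<Rightarrow> 'a \<Rightarrow> bit" where
  "restr A s = (\<lambda>x. if x \<in> A then s x else 0)"

end

theory Submission
  imports Defs
begin
declare add_bit_eq_xor[simp del] mult_bit_eq_and[simp del]

lemma bit_cases: "(x::bit) = 0 \<or> x = 1" by (cases x) auto
lemma bit_add_self[simp]: "(x::bit) + x = 0" by (cases x) auto
lemma bit_add_self2[simp]: "(x::bit) + (x + y) = y" by (cases x; cases y) auto
lemma bit_mult_self[simp]: "(x::bit) * x = x" by (cases x) auto
lemma bit_eq_add_iff: "((a::bit) + b = c) \<longleftrightarrow> (a = c + b)" by (cases a; cases b; cases c) auto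

lemma patternsD: "p \<in> patterns V \<Longrightarrow> x \<notin> V \<Longrightarrow> p x = 0"
  by (simp add: patterns_def)

lemma Nmul_add: "Nmul V E (\<lambda>x. p x + q x) v = Nmul V E p v + Nmul V E q v"
  unfolding Nmul_def by (simp add: sum.distrib[symmetric]) (rule sum.cong, auto)

lemma Nmul_scale: "Nmul V E (\<lambda>x. t * p x) v = t * Nmul V E p v"
  unfolding Nmul_def by (simp add: sum_distrib_left) (rule sum.cong, auto)

lemma Nmul_cong: "(\<And>x. x \<in> V \<Longrightarrow> p x = q x) \<Longrightarrow> Nmul V E p v = Nmul V E q v"
  unfolding Nmul_def by (rule sum.cong) auto

lemma solves_add: "solves V E p c \<Longrightarrow> solves V E q d \<Longrightarrow> solves V E (\<lambda>x. p x + q x) (\<lambda>x. c x + d x)"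
  by (simp add: solves_def Nmul_add patterns_def)

lemma solves_scale: "solves V E p c \<Longrightarrow> solves V E (\<lambda>x. t * p x) (\<lambda>x. t * c x)"
  by (simp add: solves_def Nmul_scale patterns_def)

lemma solves_cong: "solves V E p c \<Longrightarrow> (\<And>v. v \<in> V \<Longrightarrow> c v = d v) \<Longrightarrow> solves V E p d"
  by (simp add: solves_def)

lemma solves_zero: "solves V E (\<lambda>_. 0) (\<lambda>_. 0)"
  by (simp add: solves_def patterns_def Nmul_def)

lemma null_iff: "l \<in> null_patterns V E \<longleftrightarrow> solves V E l (\<lambda>_. 0)"
  by (simp add: null_patterns_def)

lemma pairing:
  assumes sym: "\<And>x y. E x y \<Longrightarrow> E y x"
  shows "(\<Sum>v\<in>V. p v * Nmul V E q v) = (\<Sum>v\<in>V. Nmul V E p v * q v)"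
proof -
  have "(\<Sum>v\<in>V. p v * Nmul V E q v) = (\<Sum>v\<in>V. \<Sum>x\<in>V. if x = v \<or> E v x then p v * q x else 0)"
    unfolding Nmul_def by (simp add: sum_distrib_left if_distrib cong: if_cong)
  also have "\<dots> = (\<Sum>x\<in>V. \<Sum>v\<in>V. if x = v \<or> E v x then p v * q x else 0)"
    by (rule sum.swap)
  also have "\<dots> = (\<Sum>x\<in>V. \<Sum>v\<in>V. if v = x \<or> E x v then p v * q x else 0)"
    by (intro sum.cong refl) (metis sym)
  also have "\<dots> = (\<Sum>v\<in>V. Nmul V E p v * q v)"
    unfolding Nmul_def sum_distrib_right by (intro sum.cong refl) auto
  finally show ?thesis .
qed

lemma sum_sym_bit:
  assumes "finite V" "\<And>i j. g i j = g j i"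
  shows "(\<Sum>i\<in>V. \<Sum>j\<in>V. g i j) = (\<Sum>i\<in>V. (g i i :: bit))"
  using assms(1)
proof (induction V rule: finite_induct)
  case empty then show ?case by simp
next
  case (insert a F)
  have "(\<Sum>i\<in>insert a F. \<Sum>j\<in>insert a F. g i j)
     = g a a + (\<Sum>j\<in>F. g a j) + ((\<Sum>i\<in>F. g i a) + (\<Sum>i\<in>F. \<Sum>j\<in>F. g i j))"
    using insert by (simp add: sum.distrib algebra_simps)
  also have "(\<Sum>i\<in>F. g i a) = (\<Sum>j\<in>F. g a j)" using assms(2) by simp
  finally show ?case using insert by (simp add: algebra_simps)
qed

lemma quad:
  assumes "sgraph V E"
  shows "(\<Sum>v\<in>V. l v * Nmul V E l v) = (\<Sum>v\<in>V. l v)"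
proof -
  have fin: "finite V" using assms by (simp add: sgraph_def)
  have "(\<Sum>v\<in>V. l v * Nmul V E l v) = (\<Sum>v\<in>V. \<Sum>x\<in>V. if x = v \<or> E v x then l v * l x else 0)"
    unfolding Nmul_def by (simp add: sum_distrib_left if_distrib cong: if_cong)
  also have "\<dots> = (\<Sum>v\<in>V. if v = v \<or> E v v then l v * l v else 0)"
    by (rule sum_sym_bit[OF fin]) (use assms in \<open>auto simp: sgraph_def mult.commute\<close>)
  finally show ?thesis by simp
qed

lemma fredholm:
  fixes A :: "'a \<Rightarrow> 'a \<Rightarrow> bit"
  assumes "finite C" "finite R"
  shows "(\<exists>p. \<forall>i\<in>R. (\<Sum>j\<in>C. A i j * p j) = c i) \<or>
         (\<exists>y. (\<forall>j\<in>C. (\<Sum>i\<in>R. y i * A i j) = 0) \<and> (\<Sum>i\<in>R. y i * c i) = 1)"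
  using assms(1)
proof (induction C arbitrary: c rule: finite_induct)
  case empty
  show ?case
  proof (cases "\<forall>i\<in>R. c i = 0")
    case True then show ?thesis by simp
  next
    case False
    then obtain i where i: "i \<in> R" "c i = 1" by auto
    have "(\<Sum>i'\<in>R. (if i' = i then 1 else 0) * c i') = 1"
      proof -
      have "(\<Sum>i'\<in>R. (if i' = i then 1 else 0) * c i') = (\<Sum>i'\<in>R. if i' = i then c i' else 0)"
        by (rule sum.cong) auto
      then show ?thesis using i assms(2) by simp
    qed
    then show ?thesis by (intro disjI2 exI[of _ "\<lambda>i'. if i' = i then 1 else 0"]) simp
  qed
next
  case (insert j C)
  note IH1 = insert.IH[of c]
  note IH2 = insert.IH[of "\<lambda>i. c i + A i j"]
  show ?case
  proof (cases "\<exists>p. \<forall>i\<in>R. (\<Sum>k\<in>C. A i k * p k) = c i")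
    case True
    then obtain p where p: "\<forall>i\<in>R. (\<Sum>k\<in>C. A i k * p k) = c i" by blast
    have "\<forall>i\<in>R. (\<Sum>k\<in>insert j C. A i k * (p(j:=0)) k) = c i"
    proof
      fix i assume "i \<in> R"
      have "(\<Sum>k\<in>C. A i k * (p(j:=0)) k) = (\<Sum>k\<in>C. A i k * p k)"
        using insert.hyps by (intro sum.cong) auto
      then show "(\<Sum>k\<in>insert j C. A i k * (p(j:=0)) k) = c i"
        using insert.hyps p \<open>i \<in> R\<close> by simp
    qed
    then show ?thesis by blast
  next
    case nt1: False
    then obtain y1 where y1: "\<forall>k\<in>C. (\<Sum>i\<in>R. y1 i * A i k) = 0" "(\<Sum>i\<in>R. y1 i * c i) = 1"
      using IH1 by blast
    show ?thesis
    proof (cases "\<exists>p. \<forall>i\<in>R. (\<Sum>k\<in>C. A i k * p k) = c i + A i j")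
      case True
      then obtain p where p: "\<forall>i\<in>R. (\<Sum>k\<in>C. A i k * p k) = c i + A i j" by blast
      have "\<forall>i\<in>R. (\<Sum>k\<in>insert j C. A i k * (p(j:=1)) k) = c i"
      proof
        fix i assume "i \<in> R"
        have "(\<Sum>k\<in>C. A i k * (p(j:=1)) k) = (\<Sum>k\<in>C. A i k * p k)"
          using insert.hyps by (intro sum.cong) auto
        then show "(\<Sum>k\<in>insert j C. A i k * (p(j:=1)) k) = c i"
          using insert.hyps p \<open>i \<in> R\<close> by (simp add: add.commute)
      qed
      then show ?thesis by blast
    next
      case False
      then obtain y2 where y2: "\<forall>k\<in>C. (\<Sum>i\<in>R. y2 i * A i k) = 0"
          "(\<Sum>i\<in>R. y2 i * (c i + A i j)) = 1"
        using IH2 by blast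
      have y2c: "(\<Sum>i\<in>R. y2 i * c i) = 1 + (\<Sum>i\<in>R. y2 i * A i j)"
        using y2(2) by (simp add: distrib_left sum.distrib bit_eq_add_iff)
      show ?thesis
      proof (cases "(\<Sum>i\<in>R. y1 i * A i j) = 0")
        case True
        then show ?thesis using y1 insert.hyps by auto
      next
        case f1: False
        show ?thesis
        proof (cases "(\<Sum>i\<in>R. y2 i * A i j) = 0")
          case True
          then show ?thesis using y2 y2c insert.hyps by auto
        next
          case False
          let ?y = "\<lambda>i. y1 i + y2 i"
          have "\<forall>k\<in>insert j C. (\<Sum>i\<in>R. ?y i * A i k) = 0"
            using y1 y2 f1 False by (auto simp: distrib_right sum.distrib)
          moreover have "(\<Sum>i\<in>R. ?y i * c i) = 1"
            using y1 y2c False by (simp add: distrib_right sum.distrib)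
          ultimately show ?thesis by (intro disjI2 exI[of _ ?y]) blast
        qed
      qed
    qed
  qed
qed

lemma sgraph_finite: "sgraph V E \<Longrightarrow> finite V" by (simp add: sgraph_def)
lemma sgraph_sym: "sgraph V E \<Longrightarrow> E x y \<Longrightarrow> E y x" by (simp add: sgraph_def)

lemma solvable:
  assumes G: "sgraph V E" and orth: "\<forall>l\<in>null_patterns V E. (\<Sum>v\<in>V. l v * c v) = 0"
  shows "\<exists>p. solves V E p c"
proof -
  define A where "A = (\<lambda>i j. if j = i \<or> E i j then 1 else (0::bit))"
  have fin: "finite V" using G by (simp add: sgraph_def)
  have rowsum: "Nmul V E (restr V p) i = (\<Sum>j\<in>V. A i j * p j)" for p i
    unfolding Nmul_def A_def restr_def by (intro sum.cong refl) auto
  have colsum: "Nmul V E (restr V y) j = (\<Sum>i\<in>V. y i * A i j)" for y j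
    unfolding Nmul_def A_def restr_def by (intro sum.cong refl) (auto dest: sgraph_sym[OF G])
  have rp: "restr V p \<in> patterns V" for p by (simp add: restr_def patterns_def)
  from fredholm[OF fin fin, of A c] show ?thesis
  proof
    assume "\<exists>p. \<forall>i\<in>V. (\<Sum>j\<in>V. A i j * p j) = c i"
    then obtain p where "\<forall>i\<in>V. (\<Sum>j\<in>V. A i j * p j) = c i" by blast
    then have "solves V E (restr V p) c" using rowsum rp by (simp add: solves_def)
    then show ?thesis by blast
  next
    assume "\<exists>y. (\<forall>j\<in>V. (\<Sum>i\<in>V. y i * A i j) = 0) \<and> (\<Sum>i\<in>V. y i * c i) = 1"
    then obtain y where y: "\<forall>j\<in>V. (\<Sum>i\<in>V. y i * A i j) = 0" "(\<Sum>i\<in>V. y i * c i) = 1" by blast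
    have "restr V y \<in> null_patterns V E"
      using y(1) colsum rp by (simp add: null_patterns_def solves_def)
    then have "(\<Sum>v\<in>V. restr V y v * c v) = 0" using orth by blast
    moreover have "(\<Sum>v\<in>V. restr V y v * c v) = (\<Sum>v\<in>V. y v * c v)"
      by (intro sum.cong refl) (simp add: restr_def)
    ultimately show ?thesis using y(2) by simp
  qed
qed

lemma null_orth:
  assumes G: "sgraph V E" and l: "l \<in> null_patterns V E" and q: "solves V E q c"
  shows "(\<Sum>v\<in>V. l v * c v) = 0"
proof -
  have "(\<Sum>v\<in>V. l v * c v) = (\<Sum>v\<in>V. l v * Nmul V E q v)"
    using q by (intro sum.cong refl) (simp add: solves_def)
  also have "\<dots> = (\<Sum>v\<in>V. Nmul V E l v * q v)" by (rule pairing) (rule sgraph_sym[OF G])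
  also have "\<dots> = 0" using l by (simp add: null_patterns_def solves_def)
  finally show ?thesis .
qed

lemma null_sum_zero:
  assumes G: "sgraph V E" and l: "l \<in> null_patterns V E"
  shows "(\<Sum>v\<in>V. l v) = 0"
proof -
  have "(\<Sum>v\<in>V. l v) = (\<Sum>v\<in>V. l v * Nmul V E l v)" using quad[OF G] by simp
  also have "\<dots> = 0" using l by (simp add: null_patterns_def solves_def)
  finally show ?thesis .
qed

lemma sum_cfg: "finite V \<Longrightarrow> u \<in> V \<Longrightarrow> (\<Sum>v\<in>V. l v * cfg u v) = l u"
  by (simp add: cfg_def if_distrib cong: if_cong)

lemma sum_lin:
  assumes "finite V" "u \<in> V"
  shows "(\<Sum>v\<in>V. l v * (a + t * cfg u v)) = a * (\<Sum>v\<in>V. l v) + t * l u"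
proof -
  have "(\<Sum>v\<in>V. l v * (a + t * cfg u v)) = (\<Sum>v\<in>V. a * l v + t * (l v * cfg u v))"
    by (intro sum.cong refl) (simp add: algebra_simps)
  also have "\<dots> = a * (\<Sum>v\<in>V. l v) + t * (\<Sum>v\<in>V. l v * cfg u v)"
    by (simp add: sum.distrib sum_distrib_left)
  finally show ?thesis using sum_cfg[OF assms] by simp
qed

lemma ones_solvable:
  assumes G: "sgraph V E" shows "\<exists>p. solves V E p ones"
proof (rule solvable[OF G], intro ballI)
  fix l assume "l \<in> null_patterns V E"
  then show "(\<Sum>v\<in>V. l v * ones v) = 0" using null_sum_zero[OF G] by (simp add: ones_def)
qed

lemma half_case:
  assumes G: "sgraph V E" and u: "u \<in> V" and h: "half_activated V E u"
    and r: "solves V E r (\<lambda>v. a + t * cfg u v)"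
  shows "t = 0"
proof -
  obtain l where l: "l \<in> null_patterns V E" "l u = 1" using h by (auto simp: half_activated_def)
  have "0 = (\<Sum>v\<in>V. l v * (a + t * cfg u v))" using null_orth[OF G l(1) r] by simp
  also have "\<dots> = t" using sum_lin[OF sgraph_finite[OF G] u] null_sum_zero[OF G l(1)] l(2) by simp
  finally show ?thesis by simp
qed

lemma nothalf_null:
  assumes "\<not> half_activated V E u" "k \<in> null_patterns V E" shows "k u = 0"
  using assms by (auto simp: half_activated_def)

lemma nothalf_exists:
  assumes G: "sgraph V E" and u: "u \<in> V" and h: "\<not> half_activated V E u"
  shows "\<exists>r. solves V E r (\<lambda>v. a + t * cfg u v)"
proof (rule solvable[OF G], intro ballI)
  fix l assume l: "l \<in> null_patterns V E"
  show "(\<Sum>v\<in>V. l v * (a + t * cfg u v)) = 0"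
    using sum_lin[OF sgraph_finite[OF G] u] null_sum_zero[OF G l] nothalf_null[OF h l] by simp
qed

lemma null_diff:
  assumes "solves V E p c" "solves V E q c" shows "(\<lambda>x. p x + q x) \<in> null_patterns V E"
  using solves_add[OF assms] by (simp add: null_patterns_def)

lemma ones_cfg_same:
  assumes G: "sgraph V E" and u: "u \<in> V" and p: "solves V E p ones" and q: "solves V E q (cfg u)"
  shows "p u = q u"
proof -
  have fin: "finite V" using G by (simp add: sgraph_def)
  have "p u = (\<Sum>v\<in>V. p v * cfg u v)" using sum_cfg[OF fin u] by simp
  also have "\<dots> = (\<Sum>v\<in>V. p v * Nmul V E q v)" using q by (intro sum.cong refl) (simp add: solves_def)
  also have "\<dots> = (\<Sum>v\<in>V. Nmul V E p v * q v)" by (rule pairing) (rule sgraph_sym[OF G])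
  also have "\<dots> = (\<Sum>v\<in>V. q v)" using p by (intro sum.cong refl) (simp add: solves_def ones_def)
  also have "\<dots> = (\<Sum>v\<in>V. q v * Nmul V E q v)" using quad[OF G] by simp
  also have "\<dots> = (\<Sum>v\<in>V. q v * cfg u v)" using q by (intro sum.cong refl) (simp add: solves_def)
  also have "\<dots> = q u" using sum_cfg[OF fin u] by simp
  finally show ?thesis .
qed

definition val :: "'a set \<Rightarrow> ('a \<Rightarrow> 'a \<Rightarrow> bool) \<Rightarrow> 'a \<Rightarrow> bit" where
  "val V E u = (if activation V E u = 1 then 1 else 0)"

lemma nothalf_value:
  assumes G: "sgraph V E" and u: "u \<in> V" and h: "\<not> half_activated V E u"
    and r: "solves V E r (\<lambda>v. a + t * cfg u v)"
  shows "r u = (a + t) * val V E u"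
proof -
  obtain p where p: "solves V E p ones" using ones_solvable[OF G] by blast
  obtain q where q0: "solves V E q (\<lambda>v. 0 + 1 * cfg u v)" using nothalf_exists[OF G u h] by blast
  have q: "solves V E q (cfg u)" using q0 by (simp add: solves_def)
  have pq: "p u = q u" by (rule ones_cfg_same[OF G u p q])
  have "solves V E (\<lambda>x. r x + (\<lambda>x. a * p x) x + (\<lambda>x. t * q x) x)
      (\<lambda>x. (a + t * cfg u x) + a * ones x + t * cfg u x)"
    by (intro solves_add solves_scale r p q)
  then have "solves V E (\<lambda>x. r x + a * p x + t * q x) (\<lambda>_. 0)"
    by (rule solves_cong) (simp add: ones_def algebra_simps)
  then have "r u + a * p u + t * q u = 0"
    using nothalf_null[OF h] by (simp add: null_patterns_def)
  then have ru: "r u = (a + t) * p u" using pq by (simp add: bit_eq_add_iff algebra_simps)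
  have "p u = val V E u"
  proof (cases "activation V E u = 1")
    case True
    then have "always_activated V E u" using h by (simp add: activation_def split: if_splits)
    then show ?thesis using True p by (simp add: always_activated_def val_def)
  next
    case False
    then have "\<not> always_activated V E u" using h by (auto simp: activation_def split: if_splits)
    then obtain p' where p': "solves V E p' ones" "p' u \<noteq> 1" using h by (auto simp: always_activated_def)
    have "p u + p' u = 0" using nothalf_null[OF h null_diff[OF p p'(1)]] by simp
    then show ?thesis using False p'(2) by (simp add: val_def bit_eq_add_iff)
  qed
  then show ?thesis using ru by simp
qed

lemma act_half: "(\<exists>l\<in>null_patterns V E. l v = 1) \<Longrightarrow> activation V E v = -1"
  by (simp add: activation_def half_activated_def)

lemma act_one: "(\<forall>l\<in>null_patterns V E. l v = 0) \<Longrightarrow> (\<forall>s. solves V E s ones \<longrightarrow> s v = 1)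
   \<Longrightarrow> activation V E v = 1"
  by (auto simp: activation_def half_activated_def always_activated_def)

lemma act_zero:
  assumes G: "sgraph V E"
  shows "(\<forall>l\<in>null_patterns V E. l v = 0) \<Longrightarrow> (\<forall>s. solves V E s ones \<longrightarrow> s v = 0)
   \<Longrightarrow> activation V E v = 0"
  using ones_solvable[OF G]
  by (auto simp: activation_def half_activated_def always_activated_def)

lemma act_range: "activation V E v \<in> {-1, 0, 1}"
  by (simp add: activation_def)

lemma act_m1: "activation V E v = -1 \<longleftrightarrow> half_activated V E v"
  by (simp add: activation_def)

lemma vs_bit: "vector_space (\<lambda>(c::bit) (f::'a \<Rightarrow> bit) x. c * f x)"
  unfolding vector_space_def by (auto simp: algebra_simps fun_eq_iff)

lemma fun_add_self: "(f::'a \<Rightarrow> bit) + f = 0"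
  by (simp add: fun_eq_iff)

lemma card_dim:
  fixes S :: "('a \<Rightarrow> bit) set"
  assumes fin: "finite S" and z: "(\<lambda>_. 0) \<in> S"
    and add: "\<And>x y. x \<in> S \<Longrightarrow> y \<in> S \<Longrightarrow> (\<lambda>v. x v + y v) \<in> S"
  shows "card S = 2 ^ vector_space.dim (\<lambda>(c::bit) (f::'a \<Rightarrow> bit) x. c * f x) S"
proof -
  interpret V: vector_space "\<lambda>(c::bit) (f::'a \<Rightarrow> bit) x. c * f x" by (rule vs_bit)
  have scl: "(\<lambda>x. c * f x) \<in> S" if "f \<in> S" for c f
  proof (cases "c = 0")
    case True then show ?thesis using z by simp
  next
    case False then have "c = 1" by simp
    then show ?thesis using that by simp
  qed
  have sub: "V.subspace S"
    unfolding V.subspace_def using z add scl by (auto simp: plus_fun_def zero_fun_def)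
  obtain B where B: "B \<subseteq> S" "V.independent B" "S \<subseteq> V.span B" "card B = V.dim S"
    by (rule V.basis_exists)
  have spanB: "V.span B = S" by (rule V.span_subspace[OF B(1) B(3) sub])
  have finB: "finite B" using B(1) fin finite_subset by blast
  define F where "F T = (\<Sum>v\<in>B. (\<lambda>x. (if v \<in> T then 1 else 0) * v x))" for T
  have "bij_betw F (Pow B) S"
  proof (rule bij_betw_imageI)
    show "inj_on F (Pow B)"
    proof (rule inj_onI)
      fix T1 T2 assume T: "T1 \<in> Pow B" "T2 \<in> Pow B" "F T1 = F T2"
      let ?u = "\<lambda>v. (if v \<in> T1 then 1 else 0) + (if v \<in> T2 then (1::bit) else 0)"
      have "(\<Sum>v\<in>B. (\<lambda>x. ?u v * v x)) = F T1 + F T2"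
      proof -
        have "\<And>v. (\<lambda>x. ?u v * v x) = (\<lambda>x. (if v \<in> T1 then 1 else 0) * v x) + (\<lambda>x. (if v \<in> T2 then 1 else 0) * v x)"
          by (simp add: fun_eq_iff distrib_right)
        then show ?thesis unfolding F_def by (simp add: sum.distrib)
      qed
      also have "\<dots> = 0" using T(3) by (simp add: fun_add_self)
      finally have "\<forall>v\<in>B. ?u v = 0"
        using V.independentD[OF B(2) finB order_refl, of ?u] by blast
      then have "\<forall>v\<in>B. (v \<in> T1) = (v \<in> T2)" by (auto split: if_splits)
      then show "T1 = T2" using T(1,2) by blast
    qed
  next
    show "F ` Pow B = S"
    proof
      show "F ` Pow B \<subseteq> S"
        unfolding F_def spanB[symmetric] V.span_finite[OF finB] by auto
    next
      show "S \<subseteq> F ` Pow B"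
      proof
        fix s assume "s \<in> S"
        then obtain u where u: "s = (\<Sum>v\<in>B. (\<lambda>x. u v * v x))"
          unfolding spanB[symmetric] V.span_finite[OF finB] by auto
        have "s = F {v\<in>B. u v = 1}"
          unfolding u F_def
        proof (intro sum.cong refl)
          fix v assume "v \<in> B"
          show "(\<lambda>x. u v * v x) = (\<lambda>x. (if v \<in> {v \<in> B. u v = 1} then 1 else 0) * v x)"
            using \<open>v \<in> B\<close> bit_cases[of "u v"] by auto
        qed
        then show "s \<in> F ` Pow B" by blast
      qed
    qed
  qed
  then have "card S = card (Pow B)" by (simp add: bij_betw_same_card)
  also have "\<dots> = 2 ^ card B" using finB by (simp add: card_Pow)
  finally show ?thesis using B(4) by simp
qed

lemma finite_patterns: "finite V \<Longrightarrow> finite (patterns V)"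
proof -
  assume "finite V"
  then have "finite {f. \<forall>x. (x \<in> V \<longrightarrow> f x \<in> (UNIV::bit set)) \<and> (x \<notin> V \<longrightarrow> f x = 0)}"
  proof (intro finite_set_of_finite_funs)
    have "(UNIV::bit set) = {0,1}" using bit_cases by auto
    then show "finite (UNIV::bit set)" by (metis finite.emptyI finite.insertI)
  qed
  then show ?thesis unfolding patterns_def by simp
qed

lemma card_null:
  assumes G: "sgraph V E"
  shows "card (null_patterns V E) = 2 ^ nullity V E"
  unfolding nullity_def
proof (rule card_dim)
  show "finite (null_patterns V E)"
    by (rule finite_subset[OF _ finite_patterns[OF sgraph_finite[OF G]]])
       (auto simp: null_patterns_def solves_def)
  show "(\<lambda>_. 0) \<in> null_patterns V E" using solves_zero by (simp add: null_patterns_def)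
  show "(\<lambda>v. x v + y v) \<in> null_patterns V E" if "x \<in> null_patterns V E" "y \<in> null_patterns V E" for x y
    using null_diff that by (simp add: null_patterns_def)
qed

lemma join_swap: "join_edges E2 E1 w u = join_edges E1 E2 u w"
  by (auto simp: join_edges_def fun_eq_iff)

locale two_graphs =
  fixes V1 V2 :: "'a set" and E1 E2 :: "'a \<Rightarrow> 'a \<Rightarrow> bool" and u w :: 'a
  assumes G1: "sgraph V1 E1" and G2: "sgraph V2 E2"
    and disj: "V1 \<inter> V2 = {}" and u: "u \<in> V1" and w: "w \<in> V2"
begin

lemma swapped: "two_graphs V2 V1 E2 E1 w u"
  using G1 G2 disj u w by unfold_locales auto

lemma uw: "u \<noteq> w" "u \<notin> V2" "w \<notin> V1" using disj u w by auto

lemma sgraph_H: "sgraph (V1 \<union> V2) (join_edges E1 E2 u w)"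
  using G1 G2 uw u w unfolding sgraph_def join_edges_def by auto

lemma Nmul_join1:
  assumes v: "v \<in> V1"
  shows "Nmul (V1 \<union> V2) (join_edges E1 E2 u w) s v = Nmul V1 E1 (restr V1 s) v + s w * cfg u v"
proof -
  have fin1: "finite V1" and fin2: "finite V2" using G1 G2 by (auto simp: sgraph_def)
  have "Nmul (V1 \<union> V2) (join_edges E1 E2 u w) s v =
     (\<Sum>x\<in>V1. if x = v \<or> join_edges E1 E2 u w v x then s x else 0) +
     (\<Sum>x\<in>V2. if x = v \<or> join_edges E1 E2 u w v x then s x else 0)"
    unfolding Nmul_def by (rule sum.union_disjoint[OF fin1 fin2 disj])
  also have "(\<Sum>x\<in>V1. if x = v \<or> join_edges E1 E2 u w v x then s x else 0) = Nmul V1 E1 (restr V1 s) v"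
    unfolding Nmul_def
  proof (intro sum.cong refl)
    fix x assume x: "x \<in> V1"
    have "join_edges E1 E2 u w v x \<longleftrightarrow> E1 v x"
      using x v uw G2 disj unfolding join_edges_def sgraph_def by blast
    then show "(if x = v \<or> join_edges E1 E2 u w v x then s x else 0) = (if x = v \<or> E1 v x then restr V1 s x else 0)"
      using x by (simp add: restr_def)
  qed
  also have "(\<Sum>x\<in>V2. if x = v \<or> join_edges E1 E2 u w v x then s x else 0) = (\<Sum>x\<in>V2. if x = w then s w * cfg u v else 0)"
  proof (intro sum.cong refl)
    fix x assume x: "x \<in> V2"
    have "(x = v \<or> join_edges E1 E2 u w v x) \<longleftrightarrow> (v = u \<and> x = w)"
      using x v uw G1 G2 disj unfolding join_edges_def sgraph_def by blast
    then show "(if x = v \<or> join_edges E1 E2 u w v x then s x else 0) = (if x = w then s w * cfg u v else 0)"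
      by (auto simp: cfg_def)
  qed
  also have "\<dots> = s w * cfg u v" using fin2 w by simp
  finally show ?thesis .
qed

lemma restr_decomp: "s \<in> patterns (V1 \<union> V2) \<Longrightarrow> s = (\<lambda>x. restr V1 s x + restr V2 s x)"
  using disj by (auto simp: fun_eq_iff restr_def patterns_def)

lemma restr_pat: "restr A s \<in> patterns A" by (simp add: restr_def patterns_def)

lemma in12: "x \<in> V2 \<Longrightarrow> x \<notin> V1" "x \<in> V1 \<Longrightarrow> x \<notin> V2" using disj by auto

end

lemma (in two_graphs) Nmul_join2:
  assumes v: "v \<in> V2"
  shows "Nmul (V1 \<union> V2) (join_edges E1 E2 u w) s v = Nmul V2 E2 (restr V2 s) v + s u * cfg w v"
proof -
  interpret S: two_graphs V2 V1 E2 E1 w u by (rule swapped)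
  show ?thesis using S.Nmul_join1[OF v] by (simp add: join_swap Un_commute)
qed

context two_graphs begin

abbreviation "VH \<equiv> V1 \<union> V2"
abbreviation "EH \<equiv> join_edges E1 E2 u w"

lemma solves_join:
  assumes s: "s \<in> patterns VH"
  shows "solves VH EH s (\<lambda>_. a) \<longleftrightarrow>
     solves V1 E1 (restr V1 s) (\<lambda>v. a + s w * cfg u v) \<and> solves V2 E2 (restr V2 s) (\<lambda>v. a + s u * cfg w v)"
proof -
  have e1: "\<forall>v\<in>V1. (Nmul VH EH s v = a) = (Nmul V1 E1 (restr V1 s) v = a + s w * cfg u v)"
    using Nmul_join1 by (simp add: bit_eq_add_iff)
  have e2: "\<forall>v\<in>V2. (Nmul VH EH s v = a) = (Nmul V2 E2 (restr V2 s) v = a + s u * cfg w v)"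
    using Nmul_join2 by (simp add: bit_eq_add_iff)
  show ?thesis using s e1 e2 unfolding solves_def by (auto simp: restr_pat)
qed

lemma solves_join_ones:
  "solves VH EH s ones \<longleftrightarrow> s \<in> patterns VH \<and>
     solves V1 E1 (restr V1 s) (\<lambda>v. 1 + s w * cfg u v) \<and> solves V2 E2 (restr V2 s) (\<lambda>v. 1 + s u * cfg w v)"
  using solves_join[of s 1] by (auto simp: ones_def solves_def)

lemma null_join:
  "l \<in> null_patterns VH EH \<longleftrightarrow> l \<in> patterns VH \<and>
     solves V1 E1 (restr V1 l) (\<lambda>v. 0 + l w * cfg u v) \<and> solves V2 E2 (restr V2 l) (\<lambda>v. 0 + l u * cfg w v)"
  using solves_join[of l 0] by (auto simp: null_patterns_def solves_def)

lemma restr_u: "restr V1 s u = s u" using u by (simp add: restr_def)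
lemma restr_w: "restr V2 s w = s w" using w by (simp add: restr_def)

lemma N1a: "l \<in> null_patterns VH EH \<Longrightarrow> \<not> half_activated V1 E1 u \<Longrightarrow> l u = l w * val V1 E1 u"
  using nothalf_value[OF G1 u, of _ 0 "l w"] by (auto simp: null_join restr_u)

lemma N1b: "l \<in> null_patterns VH EH \<Longrightarrow> half_activated V1 E1 u \<Longrightarrow> l w = 0"
  using half_case[OF G1 u, of "restr V1 l" 0 "l w"] null_join by blast

lemma S1a: "solves VH EH s ones \<Longrightarrow> \<not> half_activated V1 E1 u \<Longrightarrow> s u = (1 + s w) * val V1 E1 u"
  using nothalf_value[OF G1 u, of _ 1 "s w"] by (auto simp: solves_join_ones restr_u)

lemma S1b: "solves VH EH s ones \<Longrightarrow> half_activated V1 E1 u \<Longrightarrow> s w = 0"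
  using half_case[OF G1 u, of "restr V1 s" 1 "s w"] solves_join_ones by blast

end

context two_graphs begin

lemma N2a: "l \<in> null_patterns VH EH \<Longrightarrow> \<not> half_activated V2 E2 w \<Longrightarrow> l w = l u * val V2 E2 w"
proof -
  interpret S: two_graphs V2 V1 E2 E1 w u by (rule swapped)
  show "l \<in> null_patterns VH EH \<Longrightarrow> \<not> half_activated V2 E2 w \<Longrightarrow> l w = l u * val V2 E2 w"
    using S.N1a by (simp add: join_swap Un_commute)
qed

lemma N2b: "l \<in> null_patterns VH EH \<Longrightarrow> half_activated V2 E2 w \<Longrightarrow> l u = 0"
proof -
  interpret S: two_graphs V2 V1 E2 E1 w u by (rule swapped)
  show "l \<in> null_patterns VH EH \<Longrightarrow> half_activated V2 E2 w \<Longrightarrow> l u = 0"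
    using S.N1b by (simp add: join_swap Un_commute)
qed

lemma S2a: "solves VH EH s ones \<Longrightarrow> \<not> half_activated V2 E2 w \<Longrightarrow> s w = (1 + s u) * val V2 E2 w"
proof -
  interpret S: two_graphs V2 V1 E2 E1 w u by (rule swapped)
  show "solves VH EH s ones \<Longrightarrow> \<not> half_activated V2 E2 w \<Longrightarrow> s w = (1 + s u) * val V2 E2 w"
    using S.S1a by (simp add: join_swap Un_commute)
qed

lemma S2b: "solves VH EH s ones \<Longrightarrow> half_activated V2 E2 w \<Longrightarrow> s u = 0"
proof -
  interpret S: two_graphs V2 V1 E2 E1 w u by (rule swapped)
  show "solves VH EH s ones \<Longrightarrow> half_activated V2 E2 w \<Longrightarrow> s u = 0"
    using S.S1b by (simp add: join_swap Un_commute)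
qed

lemma restr_sum1: "k1 \<in> patterns V1 \<Longrightarrow> k2 \<in> patterns V2 \<Longrightarrow> restr V1 (\<lambda>x. k1 x + k2 x) = k1"
  using disj by (auto simp: fun_eq_iff restr_def patterns_def)

lemma restr_sum2: "k1 \<in> patterns V1 \<Longrightarrow> k2 \<in> patterns V2 \<Longrightarrow> restr V2 (\<lambda>x. k1 x + k2 x) = k2"
  using disj by (auto simp: fun_eq_iff restr_def patterns_def)

lemma pat_sum: "k1 \<in> patterns V1 \<Longrightarrow> k2 \<in> patterns V2 \<Longrightarrow> (\<lambda>x. k1 x + k2 x) \<in> patterns VH"
  by (auto simp: patterns_def)

lemma null_pat: "k \<in> null_patterns V E \<Longrightarrow> k \<in> patterns V"
  by (simp add: null_patterns_def solves_def)

lemma card_prod0: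
  assumes van: "\<forall>l\<in>null_patterns VH EH. l u = 0 \<and> l w = 0"
  shows "card (null_patterns VH EH) =
     card {k\<in>null_patterns V1 E1. k u = 0} * card {k\<in>null_patterns V2 E2. k w = 0}"
proof -
  let ?K1 = "{k\<in>null_patterns V1 E1. k u = 0}" and ?K2 = "{k\<in>null_patterns V2 E2. k w = 0}"
  let ?f = "\<lambda>(k1, k2). (\<lambda>x. k1 x + k2 x :: bit)"
  let ?g = "\<lambda>l. (restr V1 l, restr V2 l)"
  have "bij_betw ?f (?K1 \<times> ?K2) (null_patterns VH EH)"
  proof (rule bij_betw_byWitness[where f' = ?g])
    show "\<forall>a\<in>?K1 \<times> ?K2. ?g (?f a) = a"
      by (auto simp: restr_sum1 restr_sum2 null_pat)
    show "\<forall>a\<in>null_patterns VH EH. ?f (?g a) = a"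
    proof
      fix a assume "a \<in> null_patterns VH EH"
      then show "?f (?g a) = a" using restr_decomp[OF null_pat[of a]] by simp
    qed
    show "?f ` (?K1 \<times> ?K2) \<subseteq> null_patterns VH EH"
    proof clarify
      fix k1 k2 assume k: "k1 \<in> null_patterns V1 E1" "k1 u = 0" "k2 \<in> null_patterns V2 E2" "k2 w = 0"
      have p: "k1 \<in> patterns V1" "k2 \<in> patterns V2" using k null_pat by auto
      have kw: "k1 w = 0" "k2 u = 0" using p uw by (auto simp: patterns_def)
      show "(\<lambda>x. k1 x + k2 x) \<in> null_patterns VH EH"
        unfolding null_join using k p kw
        by (auto simp: restr_sum1 restr_sum2 pat_sum null_patterns_def)
    qed
    show "?g ` null_patterns VH EH \<subseteq> ?K1 \<times> ?K2"
    proof clarify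
      fix l assume l: "l \<in> null_patterns VH EH"
      then have "l u = 0" "l w = 0" using van by auto
      then show "restr V1 l \<in> ?K1 \<and> restr V2 l \<in> ?K2"
        using l unfolding null_join by (auto simp: null_patterns_def restr_u restr_w)
    qed
  qed
  then have "card (?K1 \<times> ?K2) = card (null_patterns VH EH)" by (rule bij_betw_same_card)
  then show ?thesis by (simp add: card_cartesian_product)
qed

end

lemma card_half:
  assumes G: "sgraph V E" and k0: "k0 \<in> null_patterns V E" "k0 v = 1"
  shows "card (null_patterns V E) = 2 * card {k\<in>null_patterns V E. k v = 0}"
proof -
  let ?K = "null_patterns V E"
  let ?A = "{k\<in>?K. k v = 0}" and ?B = "{k\<in>?K. k v = 1}"
  have finK: "finite ?K"
    by (rule finite_subset[OF _ finite_patterns[OF sgraph_finite[OF G]]])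
       (auto simp: null_patterns_def solves_def)
  have KAB: "?K = ?A \<union> ?B" using bit_cases by auto
  have "?B = (\<lambda>k x. k x + k0 x) ` ?A"
  proof
    show "?B \<subseteq> (\<lambda>k x. k x + k0 x) ` ?A"
    proof
      fix k assume k: "k \<in> ?B"
      have A: "(\<lambda>x. k x + k0 x) \<in> ?A" using k k0 null_diff[of V E k _ k0] by (auto simp: null_patterns_def)
      show "k \<in> (\<lambda>k x. k x + k0 x) ` ?A" by (rule rev_image_eqI[OF A]) (simp add: fun_eq_iff add.assoc)
    qed
    show "(\<lambda>k x. k x + k0 x) ` ?A \<subseteq> ?B"
      using k0 null_diff[of V E _ _ k0] by (auto simp: null_patterns_def)
  qed
  moreover have "inj_on (\<lambda>k x. k x + k0 x) ?A"
    by (rule inj_onI) (simp add: fun_eq_iff)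
  ultimately have cB: "card ?B = card ?A" by (simp add: card_image)
  have "card ?K = card ?A + card ?B"
    by (subst KAB, rule card_Un_disjoint) (use finK in auto)
  then show ?thesis using cB by simp
qed

lemma card_nothalf:
  "\<not> half_activated V E v \<Longrightarrow> {k\<in>null_patterns V E. k v = 0} = null_patterns V E"
  using nothalf_null[of V E v] by auto


lemma solves_cfg_iff: "solves V E q (\<lambda>v. 0 + 1 * cfg u v) \<longleftrightarrow> solves V E q (cfg u)"
  by (simp add: solves_def)

context two_graphs begin

lemma q1_exists:
  assumes nh: "\<not> half_activated V1 E1 u"
  obtains q1 where "solves V1 E1 q1 (cfg u)" "q1 u = val V1 E1 u" "q1 \<in> patterns V1"
proof -
  obtain q1 where q: "solves V1 E1 q1 (\<lambda>v. 0 + 1 * cfg u v)" using nothalf_exists[OF G1 u nh] by blast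
  have a: "q1 u = val V1 E1 u" using nothalf_value[OF G1 u nh q] by simp
  have b: "solves V1 E1 q1 (cfg u)" using solves_cfg_iff[THEN iffD1, OF q] .
  then have c: "q1 \<in> patterns V1" by (simp add: solves_def)
  show ?thesis by (rule that[OF b a c])
qed

lemma liftA:
  assumes nh: "\<not> half_activated V1 E1 u" and v0: "val V1 E1 u = 0"
    and q1: "solves V1 E1 q1 (cfg u)" and k1: "k1 \<in> null_patterns V1 E1" and k2: "k2 \<in> null_patterns V2 E2"
  shows "(\<lambda>x. k1 x + k2 w * q1 x + k2 x) \<in> null_patterns VH EH"
proof -
  let ?l = "\<lambda>x. k1 x + k2 w * q1 x + k2 x"
  have p: "k1 \<in> patterns V1" "q1 \<in> patterns V1" "k2 \<in> patterns V2"
    using k1 k2 q1 by (auto simp: null_patterns_def solves_def)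
  have q1u: "q1 u = 0" using nothalf_value[OF G1 u nh, of q1 0 1] q1 v0 by (simp add: solves_def)
  have k1u: "k1 u = 0" using nothalf_null[OF nh k1] .
  have r1: "restr V1 ?l = (\<lambda>x. k1 x + k2 w * q1 x)"
    using p disj by (auto simp: fun_eq_iff restr_def patterns_def in12)
  have r2: "restr V2 ?l = k2"
    using p disj by (auto simp: fun_eq_iff restr_def patterns_def in12)
  have lw: "?l w = k2 w" using p uw by (simp add: patterns_def)
  have lu: "?l u = 0" using p uw q1u k1u by (simp add: patterns_def)
  have s1: "solves V1 E1 (\<lambda>x. k1 x + k2 w * q1 x) (\<lambda>v. 0 + k2 w * cfg u v)"
    using solves_add[OF k1[unfolded null_iff] solves_scale[OF q1, of "k2 w"]] by simp
  have s2: "solves V2 E2 k2 (\<lambda>v. 0 + 0 * cfg w v)" using k2 by (simp add: null_iff)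
  show ?thesis unfolding null_join r1 r2 lw lu using s1 s2 p
    by (auto simp: patterns_def)
qed

lemma cardA:
  assumes nh: "\<not> half_activated V1 E1 u" and v0: "val V1 E1 u = 0"
  shows "card (null_patterns VH EH) = card (null_patterns V1 E1) * card (null_patterns V2 E2)"
proof -
  obtain q1 where q1: "solves V1 E1 q1 (cfg u)" "q1 u = val V1 E1 u" "q1 \<in> patterns V1"
    using q1_exists[OF nh] by blast
  let ?K1 = "null_patterns V1 E1" and ?K2 = "null_patterns V2 E2"
  let ?f = "\<lambda>(k1, k2). (\<lambda>x. k1 x + k2 w * q1 x + k2 x :: bit)"
  let ?g = "\<lambda>l. (\<lambda>x. restr V1 l x + l w * q1 x, restr V2 l)"
  have "bij_betw ?f (?K1 \<times> ?K2) (null_patterns VH EH)"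
  proof (rule bij_betw_byWitness[where f' = ?g])
    show "\<forall>a\<in>?K1 \<times> ?K2. ?g (?f a) = a"
    proof
      fix a assume "a \<in> ?K1 \<times> ?K2"
      then obtain k1 k2 where a: "a = (k1, k2)" "k1 \<in> ?K1" "k2 \<in> ?K2" by blast
      have p: "k1 \<in> patterns V1" "k2 \<in> patterns V2" using a null_pat by auto
      show "?g (?f a) = a"
        unfolding a(1) using p q1(3) disj uw by (auto simp: fun_eq_iff restr_def patterns_def in12)
    qed
    show "\<forall>a\<in>null_patterns VH EH. ?f (?g a) = a"
    proof
      fix l assume l: "l \<in> null_patterns VH EH"
      have "?f (?g l) = (\<lambda>x. restr V1 l x + restr V2 l x)"
        using restr_w by (simp add: fun_eq_iff)
      then show "?f (?g l) = l" using restr_decomp[OF null_pat[OF l]] by simp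
    qed
    show "?f ` (?K1 \<times> ?K2) \<subseteq> null_patterns VH EH"
      using liftA[OF nh v0 q1(1)] by auto
    show "?g ` null_patterns VH EH \<subseteq> ?K1 \<times> ?K2"
    proof clarify
      fix l assume l: "l \<in> null_patterns VH EH"
      have lu: "l u = 0" using N1a[OF l nh] v0 by simp
      have s: "solves V1 E1 (restr V1 l) (\<lambda>v. 0 + l w * cfg u v)"
              "solves V2 E2 (restr V2 l) (\<lambda>v. 0 + l u * cfg w v)"
        using l unfolding null_join by auto
      have "solves V1 E1 (\<lambda>x. restr V1 l x + l w * q1 x) (\<lambda>x. (0 + l w * cfg u x) + l w * cfg u x)"
        by (rule solves_add[OF s(1) solves_scale[OF q1(1)]])
      then have "solves V1 E1 (\<lambda>x. restr V1 l x + l w * q1 x) (\<lambda>_. 0)"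
        by (rule solves_cong) simp
      moreover have "solves V2 E2 (restr V2 l) (\<lambda>_. 0)" using s(2) lu by simp
      ultimately show "(\<lambda>x. restr V1 l x + l w * q1 x) \<in> ?K1 \<and> restr V2 l \<in> ?K2"
        by (simp add: null_iff)
    qed
  qed
  then have "card (?K1 \<times> ?K2) = card (null_patterns VH EH)" by (rule bij_betw_same_card)
  then show ?thesis by (simp add: card_cartesian_product)
qed

end


lemma card_bit: "card (UNIV :: bit set) = 2"
proof -
  have e: "(UNIV::bit set) = {0,1}" using bit_cases by auto
  have "card {0::bit, 1} = 2" by simp
  then show ?thesis by (subst e)
qed

lemma bit4: "(a::bit) + b + (c + d) + (b + d) = a + c"
  by (cases a; cases b; cases c; cases d) auto

context two_graphs begin

lemma q2_exists:
  assumes nh: "\<not> half_activated V2 E2 w"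
  obtains q2 where "solves V2 E2 q2 (cfg w)" "q2 w = val V2 E2 w" "q2 \<in> patterns V2"
proof -
  interpret S: two_graphs V2 V1 E2 E1 w u by (rule swapped)
  show ?thesis using S.q1_exists[OF nh] that by blast
qed

lemma liftB:
  assumes nh1: "\<not> half_activated V1 E1 u" and nh2: "\<not> half_activated V2 E2 w"
    and q1: "solves V1 E1 q1 (cfg u)" "q1 u = 1"
    and q2: "solves V2 E2 q2 (cfg w)" "q2 w = 1"
    and k1: "k1 \<in> null_patterns V1 E1" and k2: "k2 \<in> null_patterns V2 E2"
  shows "(\<lambda>x. k1 x + k2 x + t * (q1 x + q2 x)) \<in> null_patterns VH EH"
    and "(\<lambda>x. k1 x + k2 x + t * (q1 x + q2 x)) u = t"
    and "(\<lambda>x. k1 x + k2 x + t * (q1 x + q2 x)) w = t"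
proof -
  let ?l = "\<lambda>x. k1 x + k2 x + t * (q1 x + q2 x)"
  have p: "k1 \<in> patterns V1" "q1 \<in> patterns V1" "k2 \<in> patterns V2" "q2 \<in> patterns V2"
    using k1 k2 q1 q2 by (auto simp: null_patterns_def solves_def)
  have k1u: "k1 u = 0" using nothalf_null[OF nh1 k1] .
  have k2w: "k2 w = 0" using nothalf_null[OF nh2 k2] .
  have r1: "restr V1 ?l = (\<lambda>x. k1 x + t * q1 x)"
    using p disj by (auto simp: fun_eq_iff restr_def patterns_def in12)
  have r2: "restr V2 ?l = (\<lambda>x. k2 x + t * q2 x)"
    using p disj by (auto simp: fun_eq_iff restr_def patterns_def in12)
  show lw: "?l w = t" using p uw q1 q2 k2w by (simp add: patterns_def)
  show lu: "?l u = t" using p uw q1 q2 k1u by (simp add: patterns_def)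
  have s1: "solves V1 E1 (\<lambda>x. k1 x + t * q1 x) (\<lambda>v. 0 + t * cfg u v)"
    using solves_add[OF k1[unfolded null_iff] solves_scale[OF q1(1), of t]] by simp
  have s2: "solves V2 E2 (\<lambda>x. k2 x + t * q2 x) (\<lambda>v. 0 + t * cfg w v)"
    using solves_add[OF k2[unfolded null_iff] solves_scale[OF q2(1), of t]] by simp
  have pl: "?l \<in> patterns VH" using p by (auto simp: patterns_def)
  show "?l \<in> null_patterns VH EH" unfolding null_join r1 r2 lw lu using s1 s2 pl by simp
qed

lemma cardB:
  assumes nh1: "\<not> half_activated V1 E1 u" and nh2: "\<not> half_activated V2 E2 w"
    and v1: "val V1 E1 u = 1" and v2: "val V2 E2 w = 1"
  shows "card (null_patterns VH EH) = card (null_patterns V1 E1) * card (null_patterns V2 E2) * 2"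
proof -
  obtain q1 where q1: "solves V1 E1 q1 (cfg u)" "q1 u = 1" "q1 \<in> patterns V1"
    using q1_exists[OF nh1] v1 by metis
  obtain q2 where q2: "solves V2 E2 q2 (cfg w)" "q2 w = 1" "q2 \<in> patterns V2"
    using q2_exists[OF nh2] v2 by metis
  let ?K1 = "null_patterns V1 E1" and ?K2 = "null_patterns V2 E2"
  let ?f = "\<lambda>(k1, k2, t). (\<lambda>x. k1 x + k2 x + t * (q1 x + q2 x) :: bit)"
  let ?g = "\<lambda>l. (\<lambda>x. restr V1 l x + l u * q1 x, \<lambda>x. restr V2 l x + l u * q2 x, l u)"
  have "bij_betw ?f (?K1 \<times> ?K2 \<times> (UNIV::bit set)) (null_patterns VH EH)"
  proof (rule bij_betw_byWitness[where f' = ?g])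
    show "\<forall>a\<in>?K1 \<times> ?K2 \<times> (UNIV::bit set). ?g (?f a) = a"
    proof
      fix a assume "a \<in> ?K1 \<times> ?K2 \<times> (UNIV::bit set)"
      then obtain k1 k2 t where a: "a = (k1, k2, t)" "k1 \<in> ?K1" "k2 \<in> ?K2" by blast
      have p: "k1 \<in> patterns V1" "k2 \<in> patterns V2" using a null_pat by auto
      have lu: "?f a u = t" unfolding a(1) using liftB(2)[OF nh1 nh2 q1(1,2) q2(1,2) a(2,3)] by simp
      show "?g (?f a) = a"
        unfolding a(1) using lu a(1) p q1(3) q2(3) disj uw
        by (auto simp: fun_eq_iff restr_def patterns_def in12)
    qed
    show "\<forall>a\<in>null_patterns VH EH. ?f (?g a) = a"
    proof
      fix l assume l: "l \<in> null_patterns VH EH"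
      have "?f (?g l) = (\<lambda>x. restr V1 l x + restr V2 l x)"
        by (simp add: fun_eq_iff distrib_left bit4)
      then show "?f (?g l) = l" using restr_decomp[OF null_pat[OF l]] by simp
    qed
    show "?f ` (?K1 \<times> ?K2 \<times> (UNIV::bit set)) \<subseteq> null_patterns VH EH"
      using liftB(1)[OF nh1 nh2 q1(1,2) q2(1,2)] by auto
    show "?g ` null_patterns VH EH \<subseteq> ?K1 \<times> ?K2 \<times> (UNIV::bit set)"
    proof (rule image_subsetI)
      fix l assume l: "l \<in> null_patterns VH EH"
      have lu: "l u = l w" using N1a[OF l nh1] v1 by simp
      have s: "solves V1 E1 (restr V1 l) (\<lambda>v. 0 + l w * cfg u v)"
              "solves V2 E2 (restr V2 l) (\<lambda>v. 0 + l u * cfg w v)"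
        using l unfolding null_join by auto
      have a1: "solves V1 E1 (\<lambda>x. restr V1 l x + l u * q1 x) (\<lambda>x. (0 + l w * cfg u x) + l u * cfg u x)"
        by (rule solves_add[OF s(1) solves_scale[OF q1(1)]])
      have b1: "solves V1 E1 (\<lambda>x. restr V1 l x + l u * q1 x) (\<lambda>_. 0)"
        using a1 by (rule solves_cong) (simp add: lu)
      have a2: "solves V2 E2 (\<lambda>x. restr V2 l x + l u * q2 x) (\<lambda>x. (0 + l u * cfg w x) + l u * cfg w x)"
        by (rule solves_add[OF s(2) solves_scale[OF q2(1)]])
      have b2: "solves V2 E2 (\<lambda>x. restr V2 l x + l u * q2 x) (\<lambda>_. 0)"
        using a2 by (rule solves_cong) simp
      show "?g l \<in> ?K1 \<times> ?K2 \<times> (UNIV::bit set)"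
        using b1 b2 by (simp add: null_iff)
    qed
  qed
  then have "card (?K1 \<times> ?K2 \<times> (UNIV::bit set)) = card (null_patterns VH EH)" by (rule bij_betw_same_card)
  then show ?thesis by (simp add: card_cartesian_product card_bit)
qed

end


lemma act_cases:
  "activation V E v = 0 \<Longrightarrow> \<not> half_activated V E v \<and> val V E v = 0"
  "activation V E v = 1 \<Longrightarrow> \<not> half_activated V E v \<and> val V E v = 1"
  "activation V E v = -1 \<Longrightarrow> half_activated V E v"
  by (auto simp: activation_def val_def split: if_splits)

lemma act_val: "\<not> half_activated V E v \<Longrightarrow> activation V E v = (if val V E v = 1 then 1 else 0)"
  by (auto simp: activation_def val_def)

lemma ones_val:
  assumes G: "sgraph V E" and v: "v \<in> V" and nh: "\<not> half_activated V E v" and s: "solves V E s ones"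
  shows "s v = val V E v"
proof -
  have "solves V E s (\<lambda>x. 1 + 0 * cfg v x)" using s by (simp add: solves_def ones_def)
  from nothalf_value[OF G v nh this] show ?thesis by simp
qed

lemma act_sol:
  assumes G: "sgraph V E" and v: "v \<in> V" and s: "solves V E s ones"
  shows "activation V E v = 0 \<Longrightarrow> s v = 0" "activation V E v = 1 \<Longrightarrow> s v = 1"
  using ones_val[OF G v _ s] act_cases by metis+

lemma sol1: "solves V E r (\<lambda>v. 1 + 0 * cfg u v) \<Longrightarrow> solves V E r ones"
  by (simp add: solves_def ones_def)
lemma sol2: "solves V E r (\<lambda>v. 1 + 1 * cfg u v) \<Longrightarrow> solves V E r (cbar u)"
  by (simp add: solves_def cbar_def add.commute)

lemma pow2_eq: "(2::nat) ^ a = 2 ^ b \<Longrightarrow> a = b"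
  by simp

context two_graphs begin

lemma cardN: "card (null_patterns VH EH) = 2 ^ nullity VH EH"
  "card (null_patterns V1 E1) = 2 ^ nullity V1 E1" "card (null_patterns V2 E2) = 2 ^ nullity V2 E2"
  using card_null sgraph_H G1 G2 by auto

lemma uH: "u \<in> VH" and wH: "w \<in> VH" using u w by auto

lemma caseA:
  assumes a1: "activation V1 E1 u = 0"
  shows "activation VH EH u = 0 \<and> activation VH EH w = activation V2 E2 w \<and>
    int (nullity VH EH) = int (nullity V1 E1) + int (nullity V2 E2) \<and>
    (\<forall>s. solves VH EH s ones \<longrightarrow> solves V2 E2 (restr V2 s) ones \<and>
        (s w = 0 \<longrightarrow> solves V1 E1 (restr V1 s) ones) \<and> (s w = 1 \<longrightarrow> solves V1 E1 (restr V1 s) (cbar u)))"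
proof -
  have nh1: "\<not> half_activated V1 E1 u" and v1: "val V1 E1 u = 0" using act_cases(1)[OF a1] by auto
  have lu: "\<forall>l\<in>null_patterns VH EH. l u = 0" using N1a[OF _ nh1] v1 by simp
  have su: "\<forall>s. solves VH EH s ones \<longrightarrow> s u = 0" using S1a[OF _ nh1] v1 by simp
  have A1: "activation VH EH u = 0" by (rule act_zero[OF sgraph_H lu su])
  have A2: "activation VH EH w = activation V2 E2 w"
  proof (cases "half_activated V2 E2 w")
    case True
    then obtain k2 where k2: "k2 \<in> null_patterns V2 E2" "k2 w = 1" by (auto simp: half_activated_def)
    obtain q1 where q1: "solves V1 E1 q1 (cfg u)" "q1 u = val V1 E1 u" "q1 \<in> patterns V1"
      using q1_exists[OF nh1] by blast
    have z: "(\<lambda>_. 0) \<in> null_patterns V1 E1" using solves_zero by (simp add: null_iff)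
    have l: "(\<lambda>x. 0 + k2 w * q1 x + k2 x) \<in> null_patterns VH EH"
      by (rule liftA[OF nh1 v1 q1(1) z k2(1)])
    have "\<exists>l\<in>null_patterns VH EH. l w = 1"
      by (rule bexI[OF _ l]) (simp add: k2(2) patternsD[OF q1(3) uw(3)])
    then have "activation VH EH w = -1" by (rule act_half)
    moreover have "activation V2 E2 w = -1" using act_m1[THEN iffD2, OF True] .
    ultimately show ?thesis by simp
  next
    case False
    have lw: "\<forall>l\<in>null_patterns VH EH. l w = 0" proof
      fix l assume l: "l \<in> null_patterns VH EH"
      show "l w = 0" using N2a[OF l False] lu l by simp
    qed
    have sw: "\<forall>s. solves VH EH s ones \<longrightarrow> s w = val V2 E2 w" proof (intro allI impI)
      fix s assume s: "solves VH EH s ones"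
      show "s w = val V2 E2 w" using S2a[OF s False] su s by simp
    qed
    show ?thesis
    proof (cases "val V2 E2 w = 1")
      case True
      then show ?thesis using act_one[OF lw] sw act_val[OF False] by simp
    next
      case f: False
      then have "val V2 E2 w = 0" by simp
      then show ?thesis using act_zero[OF sgraph_H lw] sw act_val[OF False] f by simp
    qed
  qed
  have "card (null_patterns VH EH) = card (null_patterns V1 E1) * card (null_patterns V2 E2)"
    by (rule cardA[OF nh1 v1])
  then have "(2::nat) ^ nullity VH EH = 2 ^ (nullity V1 E1 + nullity V2 E2)"
    by (simp add: cardN power_add)
  then have "nullity VH EH = nullity V1 E1 + nullity V2 E2" by (rule pow2_eq)
  then have N: "int (nullity VH EH) = int (nullity V1 E1) + int (nullity V2 E2)" by simp
  have S: "solves V2 E2 (restr V2 s) ones \<and>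
        (s w = 0 \<longrightarrow> solves V1 E1 (restr V1 s) ones) \<and> (s w = 1 \<longrightarrow> solves V1 E1 (restr V1 s) (cbar u))"
    if s: "solves VH EH s ones" for s
  proof -
    have "s u = 0" using su s by blast
    then show ?thesis using s unfolding solves_join_ones by (auto intro: sol1 sol2)
  qed
  have S': "\<forall>s. solves VH EH s ones \<longrightarrow> solves V2 E2 (restr V2 s) ones \<and>
        (s w = 0 \<longrightarrow> solves V1 E1 (restr V1 s) ones) \<and> (s w = 1 \<longrightarrow> solves V1 E1 (restr V1 s) (cbar u))"
    using S by blast
  show ?thesis by (intro S' A1 A2 N conjI)
qed

lemma caseB:
  assumes a1: "activation V1 E1 u = 1" and a2: "activation V2 E2 w = 1"
  shows "activation VH EH u = -1 \<and> activation VH EH w = -1 \<and>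
    int (nullity VH EH) = int (nullity V1 E1) + int (nullity V2 E2) + 1 \<and>
    (\<forall>s. solves VH EH s ones \<longrightarrow>
         (s u = 0 \<and> s w = 1 \<and> solves V1 E1 (restr V1 s) (cbar u) \<and> solves V2 E2 (restr V2 s) ones)
       \<or> (s u = 1 \<and> s w = 0 \<and> solves V1 E1 (restr V1 s) ones \<and> solves V2 E2 (restr V2 s) (cbar w)))"
proof -
  have nh1: "\<not> half_activated V1 E1 u" and v1: "val V1 E1 u = 1" using act_cases(2)[OF a1] by auto
  have nh2: "\<not> half_activated V2 E2 w" and v2: "val V2 E2 w = 1" using act_cases(2)[OF a2] by auto
  obtain q1 where q1: "solves V1 E1 q1 (cfg u)" "q1 u = 1" "q1 \<in> patterns V1"
    using q1_exists[OF nh1] v1 by metis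
  obtain q2 where q2: "solves V2 E2 q2 (cfg w)" "q2 w = 1" "q2 \<in> patterns V2"
    using q2_exists[OF nh2] v2 by metis
  have z1: "(\<lambda>_. 0) \<in> null_patterns V1 E1" using solves_zero by (simp add: null_iff)
  have z2: "(\<lambda>_. 0) \<in> null_patterns V2 E2" using solves_zero by (simp add: null_iff)
  note L = liftB[OF nh1 nh2 q1(1,2) q2(1,2) z1 z2, of 1]
  have "\<exists>l\<in>null_patterns VH EH. l u = 1"
    by (rule bexI[OF _ L(1)]) (use L(2) in simp)
  then have A1: "activation VH EH u = -1" by (rule act_half)
  have "\<exists>l\<in>null_patterns VH EH. l w = 1"
    by (rule bexI[OF _ L(1)]) (use L(3) in simp)
  then have A2: "activation VH EH w = -1" by (rule act_half)
  note A = A1 A2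
  have "card (null_patterns VH EH) = card (null_patterns V1 E1) * card (null_patterns V2 E2) * 2"
    by (rule cardB[OF nh1 nh2 v1 v2])
  then have "(2::nat) ^ nullity VH EH = 2 ^ (nullity V1 E1 + nullity V2 E2 + 1)"
    by (simp add: cardN power_add)
  then have "nullity VH EH = nullity V1 E1 + nullity V2 E2 + 1" by (rule pow2_eq)
  then have N: "int (nullity VH EH) = int (nullity V1 E1) + int (nullity V2 E2) + 1" by simp
  have S: "(s u = 0 \<and> s w = 1 \<and> solves V1 E1 (restr V1 s) (cbar u) \<and> solves V2 E2 (restr V2 s) ones)
       \<or> (s u = 1 \<and> s w = 0 \<and> solves V1 E1 (restr V1 s) ones \<and> solves V2 E2 (restr V2 s) (cbar w))"
    if s: "solves VH EH s ones" for s
  proof -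
    have su: "s u = 1 + s w" using S1a[OF s nh1] v1 by simp
    show ?thesis
    proof (cases "s w = 0")
      case True
      then show ?thesis using s su unfolding solves_join_ones by (auto intro: sol1 sol2)
    next
      case False
      then have "s w = 1" by simp
      then show ?thesis using s su unfolding solves_join_ones by (auto intro: sol1 sol2)
    qed
  qed
  show ?thesis by (intro S A N allI impI conjI)
qed

lemma caseC:
  assumes a1: "activation V1 E1 u = 1" and a2: "activation V2 E2 w = -1"
  shows "activation VH EH u = 0 \<and> activation VH EH w = 1 \<and>
    int (nullity VH EH) = int (nullity V1 E1) + int (nullity V2 E2) - 1 \<and>
    (\<forall>s. solves VH EH s ones \<longrightarrow>
         solves V1 E1 (restr V1 s) (cbar u) \<and> solves V2 E2 (restr V2 s) ones)"
proof -
  have nh1: "\<not> half_activated V1 E1 u" and v1: "val V1 E1 u = 1" using act_cases(2)[OF a1] by auto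
  have h2: "half_activated V2 E2 w" using act_cases(3)[OF a2] .
  have lu: "\<forall>l\<in>null_patterns VH EH. l u = 0" using N2b[OF _ h2] by simp
  have lw: "\<forall>l\<in>null_patterns VH EH. l w = 0" proof
    fix l assume l: "l \<in> null_patterns VH EH"
    have "l u = 0" using lu l by blast
    then show "l w = 0" using N1a[OF l nh1] v1 by simp
  qed
  have su: "\<forall>s. solves VH EH s ones \<longrightarrow> s u = 0" using S2b[OF _ h2] by simp
  have sw: "\<forall>s. solves VH EH s ones \<longrightarrow> s w = 1"
  proof (intro allI impI)
    fix s assume s: "solves VH EH s ones"
    have e: "s u = 1 + s w" using S1a[OF s nh1] v1 by simp
    have "s u = 0" using su s by blast
    with e have "1 + s w = 0" by simp
    then show "s w = 1" using bit_cases[of "s w"] by auto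
  qed
  have A: "activation VH EH u = 0" "activation VH EH w = 1"
    using act_zero[OF sgraph_H lu su] act_one[OF lw sw] by auto
  obtain k2 where k2: "k2 \<in> null_patterns V2 E2" "k2 w = 1" using h2 by (auto simp: half_activated_def)
  have "card (null_patterns VH EH) = card (null_patterns V1 E1) * card {k\<in>null_patterns V2 E2. k w = 0}"
    using card_prod0 lu lw card_nothalf[OF nh1] by simp
  moreover have "card (null_patterns V2 E2) = 2 * card {k\<in>null_patterns V2 E2. k w = 0}"
    by (rule card_half[OF G2 k2])
  ultimately have "card (null_patterns VH EH) * 2 = card (null_patterns V1 E1) * card (null_patterns V2 E2)"
    by simp
  then have "(2::nat) ^ (nullity VH EH + 1) = 2 ^ (nullity V1 E1 + nullity V2 E2)"
    by (simp add: cardN power_add)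
  then have "nullity VH EH + 1 = nullity V1 E1 + nullity V2 E2" by (rule pow2_eq)
  then have N: "int (nullity VH EH) = int (nullity V1 E1) + int (nullity V2 E2) - 1" by simp
  have S: "solves V1 E1 (restr V1 s) (cbar u) \<and> solves V2 E2 (restr V2 s) ones"
    if s: "solves VH EH s ones" for s
  proof -
    have "s u = 0" "s w = 1" using su sw s by blast+
    then show ?thesis using s unfolding solves_join_ones by (auto intro: sol1 sol2)
  qed
  show ?thesis by (intro S A N allI impI conjI)
qed

lemma caseD:
  assumes a1: "activation V1 E1 u = -1" and a2: "activation V2 E2 w = -1"
  shows "activation VH EH u = 0 \<and> activation VH EH w = 0 \<and>
    int (nullity VH EH) = int (nullity V1 E1) + int (nullity V2 E2) - 2 \<and>
    (\<forall>s. solves VH EH s ones \<longrightarrow>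
         solves V1 E1 (restr V1 s) ones \<and> solves V2 E2 (restr V2 s) ones)"
proof -
  have h1: "half_activated V1 E1 u" using act_cases(3)[OF a1] .
  have h2: "half_activated V2 E2 w" using act_cases(3)[OF a2] .
  have lu: "\<forall>l\<in>null_patterns VH EH. l u = 0" using N2b[OF _ h2] by simp
  have lw: "\<forall>l\<in>null_patterns VH EH. l w = 0" using N1b[OF _ h1] by simp
  have su: "\<forall>s. solves VH EH s ones \<longrightarrow> s u = 0" using S2b[OF _ h2] by simp
  have sw: "\<forall>s. solves VH EH s ones \<longrightarrow> s w = 0" using S1b[OF _ h1] by simp
  have A: "activation VH EH u = 0" "activation VH EH w = 0"
    using act_zero[OF sgraph_H lu su] act_zero[OF sgraph_H lw sw] by auto
  obtain k1 where k1: "k1 \<in> null_patterns V1 E1" "k1 u = 1" using h1 by (auto simp: half_activated_def)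
  obtain k2 where k2: "k2 \<in> null_patterns V2 E2" "k2 w = 1" using h2 by (auto simp: half_activated_def)
  have "card (null_patterns VH EH) = card {k\<in>null_patterns V1 E1. k u = 0} * card {k\<in>null_patterns V2 E2. k w = 0}"
    using card_prod0 lu lw by simp
  moreover have "card (null_patterns V1 E1) = 2 * card {k\<in>null_patterns V1 E1. k u = 0}"
    by (rule card_half[OF G1 k1])
  moreover have "card (null_patterns V2 E2) = 2 * card {k\<in>null_patterns V2 E2. k w = 0}"
    by (rule card_half[OF G2 k2])
  ultimately have "card (null_patterns VH EH) * 4 = card (null_patterns V1 E1) * card (null_patterns V2 E2)"
    by simp
  then have "(2::nat) ^ (nullity VH EH + 2) = 2 ^ (nullity V1 E1 + nullity V2 E2)"
    by (simp add: cardN power_add)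
  then have "nullity VH EH + 2 = nullity V1 E1 + nullity V2 E2" by (rule pow2_eq)
  then have N: "int (nullity VH EH) = int (nullity V1 E1) + int (nullity V2 E2) - 2" by simp
  have S: "solves V1 E1 (restr V1 s) ones \<and> solves V2 E2 (restr V2 s) ones"
    if s: "solves VH EH s ones" for s
  proof -
    have "s u = 0" "s w = 0" using su sw s by blast+
    then show ?thesis using s unfolding solves_join_ones by (auto intro: sol1 sol2)
  qed
  show ?thesis by (intro S A N allI impI conjI)
qed

end


context two_graphs begin

lemma caseA':
  assumes a2: "activation V2 E2 w = 0"
  shows "activation VH EH w = 0 \<and> activation VH EH u = activation V1 E1 u \<and>
    int (nullity VH EH) = int (nullity V2 E2) + int (nullity V1 E1) \<and>
    (\<forall>s. solves VH EH s ones \<longrightarrow> solves V1 E1 (restr V1 s) ones \<and>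
        (s u = 0 \<longrightarrow> solves V2 E2 (restr V2 s) ones) \<and> (s u = 1 \<longrightarrow> solves V2 E2 (restr V2 s) (cbar w)))"
proof -
  interpret S: two_graphs V2 V1 E2 E1 w u by (rule swapped)
  show ?thesis using S.caseA[OF a2] by (simp add: join_swap Un_commute)
qed

lemma caseC':
  assumes a1: "activation V1 E1 u = -1" and a2: "activation V2 E2 w = 1"
  shows "activation VH EH w = 0 \<and> activation VH EH u = 1 \<and>
    int (nullity VH EH) = int (nullity V2 E2) + int (nullity V1 E1) - 1 \<and>
    (\<forall>s. solves VH EH s ones \<longrightarrow>
         solves V2 E2 (restr V2 s) (cbar w) \<and> solves V1 E1 (restr V1 s) ones)"
proof -
  interpret S: two_graphs V2 V1 E2 E1 w u by (rule swapped)
  show ?thesis using S.caseC[OF a2 a1] by (simp add: join_swap Un_commute)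
qed

end

theorem theorem3p3:
  fixes V1 V2 :: "'a set" and E1 E2 :: "'a \<Rightarrow> 'a \<Rightarrow> bool" and u w :: 'a
  assumes G1: "sgraph V1 E1" and G2: "sgraph V2 E2"
    and disj: "V1 \<inter> V2 = {}" and u: "u \<in> V1" and w: "w \<in> V2"
  defines "VH \<equiv> V1 \<union> V2"
    and "EH \<equiv> join_edges E1 E2 u w"
    and "a1 \<equiv> activation V1 E1 u"
    and "a2 \<equiv> activation V2 E2 w"
    and "dnu \<equiv> int (nullity (V1 \<union> V2) (join_edges E1 E2 u w)) - int (nullity V1 E1) - int (nullity V2 E2)"
  shows
   \<comment> \<open>(i) (0,0)\<close>
   "(a1 = 0 \<and> a2 = 0 \<longrightarrow>
      activation VH EH u = 0 \<and> activation VH EH w = 0 \<and> dnu = 0 \<and>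
      (\<forall>s. solves VH EH s ones \<longrightarrow>
         solves V1 E1 (restr V1 s) ones \<and> solves V2 E2 (restr V2 s) ones))
   \<and> \<comment> \<open>(ii) (0,1)\<close>
   (a1 = 0 \<and> a2 = 1 \<longrightarrow>
      activation VH EH u = 0 \<and> activation VH EH w = 1 \<and> dnu = 0 \<and>
      (\<forall>s. solves VH EH s ones \<longrightarrow>
         solves V1 E1 (restr V1 s) (cbar u) \<and> solves V2 E2 (restr V2 s) ones))
   \<and> \<comment> \<open>(iii) (0,-1)\<close>
   (a1 = 0 \<and> a2 = -1 \<longrightarrow>
      activation VH EH u = 0 \<and> activation VH EH w = -1 \<and> dnu = 0 \<and>
      (\<forall>s. solves VH EH s ones \<longrightarrow>
         solves V2 E2 (restr V2 s) ones \<and>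
         (s w = 0 \<longrightarrow> solves V1 E1 (restr V1 s) ones) \<and>
         (s w = 1 \<longrightarrow> solves V1 E1 (restr V1 s) (cbar u))))
   \<and> \<comment> \<open>(iv) (1,1)\<close>
   (a1 = 1 \<and> a2 = 1 \<longrightarrow>
      activation VH EH u = -1 \<and> activation VH EH w = -1 \<and> dnu = 1 \<and>
      (\<forall>s. solves VH EH s ones \<longrightarrow>
         (s u = 0 \<and> s w = 1 \<and> solves V1 E1 (restr V1 s) (cbar u) \<and> solves V2 E2 (restr V2 s) ones)
       \<or> (s u = 1 \<and> s w = 0 \<and> solves V1 E1 (restr V1 s) ones \<and> solves V2 E2 (restr V2 s) (cbar w))))
   \<and> \<comment> \<open>(v) (1,-1)\<close>
   (a1 = 1 \<and> a2 = -1 \<longrightarrow>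
      activation VH EH u = 0 \<and> activation VH EH w = 1 \<and> dnu = -1 \<and>
      (\<forall>s. solves VH EH s ones \<longrightarrow>
         solves V1 E1 (restr V1 s) (cbar u) \<and> solves V2 E2 (restr V2 s) ones))
   \<and> \<comment> \<open>(vi) (-1,-1)\<close>
   (a1 = -1 \<and> a2 = -1 \<longrightarrow>
      activation VH EH u = 0 \<and> activation VH EH w = 0 \<and> dnu = -2 \<and>
      (\<forall>s. solves VH EH s ones \<longrightarrow>
         solves V1 E1 (restr V1 s) ones \<and> solves V2 E2 (restr V2 s) ones))
   \<and> \<comment> \<open>(ii') (1,0): (ii) with roles interchanged\<close>
   (a1 = 1 \<and> a2 = 0 \<longrightarrow>
      activation VH EH w = 0 \<and> activation VH EH u = 1 \<and> dnu = 0 \<and>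
      (\<forall>s. solves VH EH s ones \<longrightarrow>
         solves V2 E2 (restr V2 s) (cbar w) \<and> solves V1 E1 (restr V1 s) ones))
   \<and> \<comment> \<open>(iii') (-1,0)\<close>
   (a1 = -1 \<and> a2 = 0 \<longrightarrow>
      activation VH EH w = 0 \<and> activation VH EH u = -1 \<and> dnu = 0 \<and>
      (\<forall>s. solves VH EH s ones \<longrightarrow>
         solves V1 E1 (restr V1 s) ones \<and>
         (s u = 0 \<longrightarrow> solves V2 E2 (restr V2 s) ones) \<and>
         (s u = 1 \<longrightarrow> solves V2 E2 (restr V2 s) (cbar w))))
   \<and> \<comment> \<open>(v') (-1,1)\<close>
   (a1 = -1 \<and> a2 = 1 \<longrightarrow>
      activation VH EH w = 0 \<and> activation VH EH u = 1 \<and> dnu = -1 \<and>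
      (\<forall>s. solves VH EH s ones \<longrightarrow>
         solves V2 E2 (restr V2 s) (cbar w) \<and> solves V1 E1 (restr V1 s) ones))
   \<and> \<comment> \<open>compact form\<close>
   dnu = (if a1 = -1 \<and> a2 = -1 then -2 else a1 * a2)
   \<and> activation VH EH u mod 3 = (a1 * (1 + a2)) mod 3
   \<and> activation VH EH w mod 3 = (a2 * (1 + a1)) mod 3"
proof -
  interpret T: two_graphs V1 V2 E1 E2 u w using G1 G2 disj u w by unfold_locales
  note defs = assms(6-10)
  have solH: "\<And>s. solves VH EH s ones \<Longrightarrow> activation VH EH u = 0 \<Longrightarrow> s u = 0"
    "\<And>s. solves VH EH s ones \<Longrightarrow> activation VH EH u = 1 \<Longrightarrow> s u = 1"
    "\<And>s. solves VH EH s ones \<Longrightarrow> activation VH EH w = 0 \<Longrightarrow> s w = 0"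
    "\<And>s. solves VH EH s ones \<Longrightarrow> activation VH EH w = 1 \<Longrightarrow> s w = 1"
    unfolding defs using act_sol[OF T.sgraph_H T.uH] act_sol[OF T.sgraph_H T.wH] by blast+
  have r1: "a1 = -1 \<or> a1 = 0 \<or> a1 = 1" using act_range[of V1 E1 u] unfolding defs by auto
  have r2: "a2 = -1 \<or> a2 = 0 \<or> a2 = 1" using act_range[of V2 E2 w] unfolding defs by auto
  note cA = T.caseA[folded defs] and cA' = T.caseA'[folded defs] and cB = T.caseB[folded defs]
    and cC = T.caseC[folded defs] and cC' = T.caseC'[folded defs] and cD = T.caseD[folded defs]
  have dnu: "dnu = int (nullity VH EH) - int (nullity V1 E1) - int (nullity V2 E2)"
    unfolding defs by simp
  from r1 r2 show ?thesis
  proof (elim disjE)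
    assume h: "a1 = -1" "a2 = -1"
    show ?thesis using cD[OF h] dnu h by simp
  next
    assume h: "a1 = -1" "a2 = 0"
    show ?thesis using cA'[OF h(2)] dnu h by simp
  next
    assume h: "a1 = -1" "a2 = 1"
    show ?thesis using cC'[OF h] dnu h by simp
  next
    assume h: "a1 = 0" "a2 = -1"
    show ?thesis using cA[OF h(1)] dnu h by simp
  next
    assume h: "a1 = 0" "a2 = 0"
    have c: "activation VH EH u = 0 \<and> activation VH EH w = 0 \<and>
      int (nullity VH EH) = int (nullity V1 E1) + int (nullity V2 E2) \<and>
      (\<forall>s. solves VH EH s ones \<longrightarrow> solves V2 E2 (restr V2 s) ones \<and>
        (s w = 0 \<longrightarrow> solves V1 E1 (restr V1 s) ones) \<and> (s w = 1 \<longrightarrow> solves V1 E1 (restr V1 s) (cbar u)))"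
      using cA[OF h(1)] h by simp
    then have "\<forall>s. solves VH EH s ones \<longrightarrow> solves V1 E1 (restr V1 s) ones \<and> solves V2 E2 (restr V2 s) ones"
      using solH(3) by blast
    then show ?thesis using c dnu h by simp
  next
    assume h: "a1 = 0" "a2 = 1"
    have c: "activation VH EH u = 0 \<and> activation VH EH w = 1 \<and>
      int (nullity VH EH) = int (nullity V1 E1) + int (nullity V2 E2) \<and>
      (\<forall>s. solves VH EH s ones \<longrightarrow> solves V2 E2 (restr V2 s) ones \<and>
        (s w = 0 \<longrightarrow> solves V1 E1 (restr V1 s) ones) \<and> (s w = 1 \<longrightarrow> solves V1 E1 (restr V1 s) (cbar u)))"
      using cA[OF h(1)] h by simp
    then have "\<forall>s. solves VH EH s ones \<longrightarrow> solves V1 E1 (restr V1 s) (cbar u) \<and> solves V2 E2 (restr V2 s) ones"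
      using solH(4) by blast
    then show ?thesis using c dnu h by simp
  next
    assume h: "a1 = 1" "a2 = -1"
    show ?thesis using cC[OF h] dnu h by simp
  next
    assume h: "a1 = 1" "a2 = 0"
    have c: "activation VH EH w = 0 \<and> activation VH EH u = 1 \<and>
      int (nullity VH EH) = int (nullity V2 E2) + int (nullity V1 E1) \<and>
      (\<forall>s. solves VH EH s ones \<longrightarrow> solves V1 E1 (restr V1 s) ones \<and>
        (s u = 0 \<longrightarrow> solves V2 E2 (restr V2 s) ones) \<and> (s u = 1 \<longrightarrow> solves V2 E2 (restr V2 s) (cbar w)))"
      using cA'[OF h(2)] h by simp
    then have "\<forall>s. solves VH EH s ones \<longrightarrow> solves V2 E2 (restr V2 s) (cbar w) \<and> solves V1 E1 (restr V1 s) ones"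
      using solH(2) by blast
    then show ?thesis using c dnu h by simp
  next
    assume h: "a1 = 1" "a2 = 1"
    show ?thesis using cB[OF h] dnu h by simp
  qed
qed

end
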